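(* Let $A$ be a finite nonempty subset of $(0,\infty)$ and let $f:A\to[0,\infty)$. Define the discrete Hirsch relation $h_f=\{(f(a)/a,\,a): a\in A\}$. Then $h_f=f$ (i.e. $h_f$ coincides with the graph $\{(a,f(a)):a\in A\}$ of $f$) if and only if $A=\{1\}$ and $f(1)=1$.
   Context: For a function $f$ on a finite set $A\subset(0,\infty)$, the Hirsch function $h_f$ is defined exactly at the points $\theta=f(a)/a$, $a\in A$, and maps $f(a)/a$ to $a$. Equality $h_f=f$ means equality of functions: same domain and same values (equivalently, equality of the graphs as sets of pairs). *)

theory Defs
  imports Main Complex_Main
begin

definition graph_on :: "real set \<Rightarrow> (real \<Rightarrow> real) \<Rightarrow> (real \<times> real) set" where
  "graph_on A f = {(a, f a) | a. a \<in> A}"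

definition hirsch_rel :: "real set \<Rightarrow> (real \<Rightarrow> real) \<Rightarrow> (real \<times> real) set" where
  "hirsch_rel A f = {(f a / a, a) | a. a \<in> A}"

end

theory Submission
  imports Defs
begin

theorem theorem3:
  fixes A :: "real set" and f :: "real \<Rightarrow> real"
  assumes "finite A" and "A \<noteq> {}" and "\<forall>a\<in>A. a > 0"
    and "\<forall>a\<in>A. f a \<ge> 0"
  shows "hirsch_rel A f = graph_on A f \<longleftrightarrow> (A = {1} \<and> f 1 = 1)"
proof
  assume "A = {1} \<and> f 1 = 1"
  then show "hirsch_rel A f = graph_on A f" by (auto simp: hirsch_rel_def graph_on_def)
next
  assume E: "hirsch_rel A f = graph_on A f"
  define g where "g a = f a / a" for a
  have H: "g a \<in> A \<and> f (g a) = a" if "a \<in> A" for a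
  proof -
    have "(g a, a) \<in> graph_on A f" using E that unfolding g_def hirsch_rel_def by auto
    then show ?thesis unfolding graph_on_def by auto
  qed
  have F: "f a \<in> A" if "a \<in> A" for a
  proof -
    have "(a, f a) \<in> hirsch_rel A f" using E that unfolding graph_on_def by auto
    then show ?thesis unfolding hirsch_rel_def by auto
  qed
  have pos: "a > 0" if "a \<in> A" for a using assms(3) that by auto
  have fg: "f a = a * g a" if "a \<in> A" for a using pos[OF that] unfolding g_def by simp
  define M where "M = Max A"
  define m where "m = Min A"
  have MA: "M \<in> A" and mA: "m \<in> A" unfolding M_def m_def using assms(1,2) by auto
  have leM: "a \<le> M" if "a \<in> A" for a unfolding M_def using assms(1) that by auto
  have gem: "m \<le> a" if "a \<in> A" for a unfolding m_def using assms(1) that by auto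
  define b where "b = g M"
  have bA: "b \<in> A" and fb: "f b = M" using H[OF MA] b_def by auto
  have "f M \<le> M" using leM F MA by auto
  hence b1: "b \<le> 1" using pos[OF MA] unfolding b_def g_def by (simp add: divide_le_eq)
  have gbA: "g b \<in> A" using H[OF bA] by auto
  have "M = b * g b" using fg[OF bA] fb by simp
  moreover have "g b \<le> M" using leM gbA by auto
  moreover have "b > 0" "g b > 0" using pos bA gbA by auto
  ultimately have "b * g b \<le> b * M" by (intro mult_left_mono) auto
  hence "1 * M \<le> b * M" using \<open>M = b * g b\<close> by simp
  hence "1 \<le> b" using pos[OF MA] by (simp only: mult_le_cancel_right)
  hence "b = 1" using b1 by simp
  hence f1M: "f 1 = M" using fb by simp
  define c where "c = g m"
  have cA: "c \<in> A" and fc: "f c = m" using H[OF mA] c_def by auto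
  have "m \<le> f m" using gem F mA by auto
  hence c1: "1 \<le> c" using pos[OF mA] unfolding c_def g_def by (simp add: le_divide_eq)
  have gcA: "g c \<in> A" using H[OF cA] by auto
  have "m = c * g c" using fg[OF cA] fc by simp
  moreover have "m \<le> g c" using gem gcA by auto
  moreover have "c > 0" "g c > 0" using pos cA gcA by auto
  ultimately have "c * m \<le> c * g c" by (intro mult_left_mono) auto
  hence "c * m \<le> 1 * m" using \<open>m = c * g c\<close> by simp
  hence "c \<le> 1" using pos[OF mA] by (simp only: mult_le_cancel_right)
  hence "c = 1" using c1 by simp
  hence f1m: "f 1 = m" using fc by simp
  have oneA: "1 \<in> A" using \<open>b = 1\<close> bA by simp
  have "A = {1}"
  proof
    show "A \<subseteq> {1}"
    proof
      fix a assume "a \<in> A"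
      hence "m \<le> a" "a \<le> M" "m \<le> 1" "1 \<le> M" using leM gem oneA by auto
      thus "a \<in> {1}" using f1M f1m by simp
    qed
  qed (use oneA in auto)
  moreover have "f 1 = 1" using \<open>A = {1}\<close> F by auto
  ultimately show "A = {1} \<and> f 1 = 1" by simp
qed

end
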